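(* If $T$ is a subcubic tree of order $n$, then $\psi(T)\le \frac{4n+2}{5}$. Furthermore, equality holds if and only if $T$ arises from $K_2$ by iteratively attaching $P_5$'s (i.e., by applying the operation of attaching a $P_5$ zero or more times).
   Context: All graphs are finite, simple and undirected. A subcubic tree is a tree of maximum degree at most $3$. A dissociation set in a graph $G$ is a vertex subset $F$ such that the induced subgraph $G[F]$ has maximum degree at most $1$; the dissociation number $\psi(G)$ is the maximum cardinality of a dissociation set of $G$. Attaching a $P_5$ to a tree $T$: choose a vertex $u$ of $T$ and form the tree $T'$ with $V(T')=V(T)\cup\{x,y,z,j,k\}$ (five new vertices) and $E(T')=E(T)\cup\{uz,zy,zj,yx,jk\}$. *)

theory Defs
  imports Complex_Main
begin

definition simple_graph :: "'a set \<Rightarrow> 'a set set \<Rightarrow> bool" where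
  "simple_graph V E \<longleftrightarrow> finite V \<and> (\<forall>e\<in>E. \<exists>u v. e = {u, v} \<and> u \<noteq> v \<and> u \<in> V \<and> v \<in> V)"

definition adj :: "'a set set \<Rightarrow> 'a \<Rightarrow> 'a \<Rightarrow> bool" where
  "adj E u v \<longleftrightarrow> {u, v} \<in> E"

definition degree :: "'a set \<Rightarrow> 'a set set \<Rightarrow> 'a \<Rightarrow> nat" where
  "degree V E v = card {u \<in> V. adj E u v}"

fun walk :: "'a set set \<Rightarrow> 'a list \<Rightarrow> bool" where
  "walk E [] = True"
| "walk E [v] = True"
| "walk E (u # v # vs) = (adj E u v \<and> walk E (v # vs))"

definition connected_graph :: "'a set \<Rightarrow> 'a set set \<Rightarrow> bool" where
  "connected_graph V E \<longleftrightarrow>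
     (\<forall>u\<in>V. \<forall>v\<in>V. \<exists>p. p \<noteq> [] \<and> hd p = u \<and> last p = v \<and> set p \<subseteq> V \<and> walk E p)"

definition has_cycle :: "'a set \<Rightarrow> 'a set set \<Rightarrow> bool" where
  "has_cycle V E \<longleftrightarrow>
     (\<exists>p. length p \<ge> 3 \<and> distinct p \<and> set p \<subseteq> V \<and> walk E p \<and> adj E (last p) (hd p))"

definition tree :: "'a set \<Rightarrow> 'a set set \<Rightarrow> bool" where
  "tree V E \<longleftrightarrow> simple_graph V E \<and> V \<noteq> {} \<and> connected_graph V E \<and> \<not> has_cycle V E"

definition subcubic_tree :: "'a set \<Rightarrow> 'a set set \<Rightarrow> bool" where
  "subcubic_tree V E \<longleftrightarrow> tree V E \<and> (\<forall>v\<in>V. degree V E v \<le> 3)"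

definition dissociation_set :: "'a set \<Rightarrow> 'a set set \<Rightarrow> 'a set \<Rightarrow> bool" where
  "dissociation_set V E F \<longleftrightarrow> F \<subseteq> V \<and> (\<forall>v\<in>F. card {u \<in> F. adj E u v} \<le> 1)"

definition dissociation_number :: "'a set \<Rightarrow> 'a set set \<Rightarrow> nat" where
  "dissociation_number V E = Max (card ` {F. dissociation_set V E F})"

inductive_set P5_trees :: "('a set \<times> 'a set set) set" where
  K2: "a \<noteq> b \<Longrightarrow> ({a, b}, {{a, b}}) \<in> P5_trees"
| attach: "\<lbrakk> (V, E) \<in> P5_trees; u \<in> V; distinct [x, y, z, j, k];
            x \<notin> V; y \<notin> V; z \<notin> V; j \<notin> V; k \<notin> V \<rbrakk>
           \<Longrightarrow> (V \<union> {x, y, z, j, k}, E \<union> {{u, z}, {z, y}, {z, j}, {y, x}, {j, k}}) \<in> P5_trees"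

end

theory Submission
  imports Defs
begin

lemma adj_sym: "adj E u v = adj E v u"
  by (simp add: adj_def insert_commute)

lemma adj_irrefl: "simple_graph V E \<Longrightarrow> \<not> adj E v v"
  unfolding simple_graph_def adj_def by (metis doubleton_eq_iff insert_absorb2)

lemma adj_V: "simple_graph V E \<Longrightarrow> adj E u v \<Longrightarrow> u \<in> V \<and> v \<in> V"
  unfolding simple_graph_def adj_def by (metis doubleton_eq_iff)

lemma walk_Cons: "walk E (v # q) \<longleftrightarrow> (q = [] \<or> (adj E v (hd q) \<and> walk E q))"
  by (cases q) auto

lemma walk_mono: "walk E p \<Longrightarrow> (\<And>a b. adj E a b \<Longrightarrow> adj E' a b) \<Longrightarrow> walk E' p"
  by (induction E p rule: walk.induct) auto

lemma walk_closed: "walk E p \<Longrightarrow> p \<noteq> [] \<Longrightarrow> hd p \<in> C \<Longrightarrow> (\<And>a b. a \<in> C \<Longrightarrow> adj E a b \<Longrightarrow> b \<in> C) \<Longrightarrow> set p \<subseteq> C"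
  by (induction E p rule: walk.induct) auto

lemma sum_tight:
  fixes g :: "'b \<Rightarrow> nat"
  assumes "finite A" "\<forall>x\<in>A. g x \<le> c" "c * card A \<le> sum g A" "x \<in> A"
  shows "g x = c"
proof (rule ccontr)
  assume "g x \<noteq> c"
  then have "g x < c" using assms by force
  then have "sum g A < sum (\<lambda>_. c) A"
    using assms by (intro sum_strict_mono_ex1) auto
  then show False using assms(3) by (simp add: mult.commute)
qed

lemma card_filter_sum: "finite A \<Longrightarrow> card {x\<in>A. P x} = (\<Sum>x\<in>A. if P x then 1 else 0 :: nat)"
  by (simp add: sum.inter_filter[symmetric])

lemma double_count:
  assumes "finite A" "finite B"
  shows "(\<Sum>v\<in>A. card {u\<in>B. R u v}) = (\<Sum>u\<in>B. card {v\<in>A. R u v})"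
proof -
  have "(\<Sum>v\<in>A. card {u\<in>B. R u v}) = (\<Sum>v\<in>A. \<Sum>u\<in>B. if R u v then 1 else 0 :: nat)"
    using assms by (simp add: card_filter_sum)
  also have "\<dots> = (\<Sum>u\<in>B. \<Sum>v\<in>A. if R u v then 1 else 0 :: nat)"
    by (rule sum.swap)
  also have "\<dots> = (\<Sum>u\<in>B. card {v\<in>A. R u v})"
    using assms by (simp add: card_filter_sum)
  finally show ?thesis .
qed

lemma conn_pairs:
  assumes sg: "simple_graph V E" and conn: "connected_graph V E" and r: "r \<in> V"
  shows "2 * (card V - 1) \<le> card (SIGMA v:V. {u\<in>V. adj E u v})"
proof -
  have fin: "finite V" using sg simple_graph_def by blast
  define W where "W v k \<longleftrightarrow> (\<exists>p. walk E p \<and> p \<noteq> [] \<and> hd p = v \<and> last p = r \<and> set p \<subseteq> V \<and> length p = Suc k)" for v k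
  define d where "d v = (LEAST k. W v k)" for v
  have ex: "\<exists>k. W v k" if vV: "v \<in> V" for v
  proof -
    obtain p where "p \<noteq> []" "hd p = v" "last p = r" "set p \<subseteq> V" "walk E p"
      using conn[unfolded connected_graph_def, rule_format, OF vV r] by blast
    then have "W v (length p - 1)" unfolding W_def by (intro exI[of _ p]) auto
    then show ?thesis by blast
  qed
  have step: "\<exists>a\<in>V. adj E v a \<and> d a < d v" if vV: "v \<in> V" and vr: "v \<noteq> r" for v
  proof -
    have "W v (d v)" unfolding d_def by (rule LeastI_ex[OF ex[OF vV]])
    then obtain p where p: "walk E p" "p \<noteq> []" "hd p = v" "last p = r" "set p \<subseteq> V" "length p = Suc (d v)"
      unfolding W_def by blast
    then obtain a rest where pe: "p = v # a # rest"
      using vr by (metis hd_Cons_tl last_ConsL list.exhaust_sel)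
    have "W a (length rest)" unfolding W_def
      using p pe by (intro exI[of _ "a # rest"]) auto
    then have "d a \<le> length rest" unfolding d_def by (rule Least_le)
    moreover have "d v = Suc (length rest)" using p pe by simp
    ultimately show ?thesis using p pe by auto
  qed
  define par where "par v = (SOME a. a\<in>V \<and> adj E v a \<and> d a < d v)" for v
  have par: "par v \<in> V \<and> adj E v (par v) \<and> d (par v) < d v" if "v \<in> V - {r}" for v
  proof -
    have "\<exists>a. a\<in>V \<and> adj E v a \<and> d a < d v" using step[of v] that by blast
    then show ?thesis unfolding par_def by (rule someI_ex)
  qed
  define A1 where "A1 = (\<lambda>v. (v, par v)) ` (V - {r})"
  define A2 where "A2 = (\<lambda>v. (par v, v)) ` (V - {r})"
  have c1: "card A1 = card V - 1" unfolding A1_def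
    using fin r by (subst card_image) (auto intro: inj_onI)
  have c2: "card A2 = card V - 1" unfolding A2_def
    using fin r by (subst card_image) (auto intro: inj_onI)
  have disj: "A1 \<inter> A2 = {}"
  proof (rule ccontr)
    assume "A1 \<inter> A2 \<noteq> {}"
    then obtain v w where vw: "v \<in> V - {r}" "w \<in> V - {r}" "(v, par v) = (par w, w)"
      unfolding A1_def A2_def by blast
    then have e1: "v = par w" and e2: "par v = w" by auto
    have "d (par v) < d v" "d (par w) < d w" using par[OF vw(1)] par[OF vw(2)] by auto
    then show False unfolding e2 by (simp add: e1[symmetric])
  qed
  have sub: "A1 \<union> A2 \<subseteq> (SIGMA v:V. {u\<in>V. adj E u v})"
    unfolding A1_def A2_def using par by (auto simp: adj_sym)
  have "card (A1 \<union> A2) = 2 * (card V - 1)"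
    using c1 c2 disj fin unfolding A1_def A2_def by (subst card_Un_disjoint) auto
  moreover have "card (A1 \<union> A2) \<le> card (SIGMA v:V. {u\<in>V. adj E u v})"
    using sub fin by (intro card_mono) auto
  ultimately show ?thesis by simp
qed

lemma bound_core:
  assumes sg: "simple_graph V E" and conn: "connected_graph V E" and ne: "V \<noteq> {}"
    and dg: "\<forall>v\<in>V. degree V E v \<le> 3" and Fd: "dissociation_set V E F"
  shows "2 * card V \<le> card F + 6 * card (V - F) + 2"
    and "2 * card V = card F + 6 * card (V - F) + 2 \<Longrightarrow>
         (\<forall>v\<in>F. card {w\<in>F. adj E w v} = 1) \<and> (\<forall>v\<in>V-F. card {w\<in>F. adj E w v} = 3) \<and>
         (\<Sum>v\<in>F. card {w\<in>V-F. adj E w v}) = 3 * card (V - F)"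
proof -
  have fin: "finite V" using sg simple_graph_def by blast
  have FV: "F \<subseteq> V" using Fd unfolding dissociation_set_def by simp
  have finF: "finite F" using fin FV by (rule finite_subset[rotated])
  define S where "S = V - F"
  have finS: "finite S" using fin S_def by simp
  define a where "a v = card {w\<in>F. adj E w v}" for v
  define b where "b v = card {w\<in>S. adj E w v}" for v
  obtain r where r: "r \<in> V" using ne by blast
  define D where "D = card (SIGMA v:V. {u\<in>V. adj E u v})"
  have D1: "2 * (card V - 1) \<le> D" unfolding D_def by (rule conn_pairs[OF sg conn r])
  have D2: "D = (\<Sum>v\<in>V. degree V E v)" unfolding D_def degree_def
    using fin by (subst card_SigmaI) auto
  have split: "degree V E v = a v + b v" if "v \<in> V" for v
  proof -
    have "{u\<in>V. adj E u v} = {w\<in>F. adj E w v} \<union> {w\<in>S. adj E w v}"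
      using FV unfolding S_def by blast
    then show ?thesis unfolding degree_def a_def b_def
      using finF finS by (simp add: card_Un_disjoint S_def disjoint_iff)
  qed
  have VFS: "(\<Sum>v\<in>V. degree V E v) = (\<Sum>v\<in>F. degree V E v) + (\<Sum>v\<in>S. degree V E v)"
    unfolding S_def using sum.subset_diff[OF FV fin, of "degree V E"] by (simp add: add.commute)
  have SF: "(\<Sum>v\<in>F. degree V E v) = (\<Sum>v\<in>F. a v) + (\<Sum>v\<in>F. b v)"
    using split FV by (simp add: sum.distrib[symmetric] subset_iff)
  have SS: "(\<Sum>v\<in>S. degree V E v) = (\<Sum>v\<in>S. a v) + (\<Sum>v\<in>S. b v)"
    using split by (simp add: sum.distrib[symmetric] S_def)
  have swap: "(\<Sum>v\<in>F. b v) = (\<Sum>v\<in>S. a v)"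
  proof -
    have "(\<Sum>v\<in>F. b v) = (\<Sum>u\<in>S. card {v\<in>F. adj E u v})"
      unfolding b_def by (rule double_count[OF finF finS])
    also have "\<dots> = (\<Sum>v\<in>S. a v)" unfolding a_def by (simp add: adj_sym)
    finally show ?thesis .
  qed
  have Fa: "(\<Sum>v\<in>F. a v) \<le> card F"
  proof -
    have "(\<Sum>v\<in>F. a v) \<le> (\<Sum>v\<in>F. 1)"
      using Fd unfolding dissociation_set_def a_def by (intro sum_mono) auto
    then show ?thesis by simp
  qed
  have le6: "2 * a v + b v \<le> 6" if "v \<in> S" for v
    using split[of v] dg that by (auto simp: S_def)
  have Sab: "(\<Sum>v\<in>S. 2 * a v + b v) \<le> 6 * card S"
  proof -
    have "(\<Sum>v\<in>S. 2 * a v + b v) \<le> (\<Sum>v\<in>S. 6)" using le6 by (intro sum_mono) auto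
    then show ?thesis by simp
  qed
  have Sab2: "(\<Sum>v\<in>S. 2 * a v + b v) = 2 * (\<Sum>v\<in>S. a v) + (\<Sum>v\<in>S. b v)"
    by (simp add: sum.distrib sum_distrib_left)
  have cV: "card V = card F + card S" unfolding S_def
    using fin FV by (metis card_Diff_subset finF le_add_diff_inverse card_mono)
  have Deq: "D = (\<Sum>v\<in>F. a v) + (\<Sum>v\<in>S. 2 * a v + b v)"
    using D2 VFS SF SS swap Sab2 by simp
  have cpos: "card V \<ge> 1" using fin ne by (simp add: Suc_le_eq card_gt_0_iff)
  show main: "2 * card V \<le> card F + 6 * card (V - F) + 2"
    using D1 Deq Fa Sab cpos unfolding S_def[symmetric] by linarith
  assume eq: "2 * card V = card F + 6 * card (V - F) + 2"
  have t1: "1 * card F \<le> (\<Sum>v\<in>F. a v)"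
    using D1 Deq Fa Sab cpos eq unfolding S_def[symmetric] by linarith
  have t2: "6 * card S \<le> (\<Sum>v\<in>S. 2 * a v + b v)"
    using D1 Deq Fa Sab cpos eq unfolding S_def[symmetric] by linarith
  have A1: "\<forall>v\<in>F. a v = 1"
  proof
    fix v assume "v \<in> F"
    show "a v = 1"
      apply (rule sum_tight[OF finF _ t1 \<open>v \<in> F\<close>])
      using Fd unfolding dissociation_set_def a_def by auto
  qed
  have A3: "\<forall>v\<in>S. a v = 3"
  proof
    fix v assume vS: "v \<in> S"
    have "2 * a v + b v = 6"
      by (rule sum_tight[OF finS _ t2 vS]) (use le6 in auto)
    then show "a v = 3" using split[of v] dg vS by (auto simp: S_def)
  qed
  have "(\<Sum>v\<in>F. card {w\<in>V-F. adj E w v}) = (\<Sum>v\<in>S. a v)"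
    using swap unfolding b_def S_def by simp
  also have "\<dots> = 3 * card S" using A3 by simp
  finally show "(\<forall>v\<in>F. card {w\<in>F. adj E w v} = 1) \<and> (\<forall>v\<in>V-F. card {w\<in>F. adj E w v} = 3) \<and>
         (\<Sum>v\<in>F. card {w\<in>V-F. adj E w v}) = 3 * card (V - F)"
    using A1 A3 unfolding a_def S_def by simp
qed

lemma diss_fin: "finite V \<Longrightarrow> finite {F. dissociation_set V E F}"
  unfolding dissociation_set_def by (rule finite_subset[of _ "Pow V"]) auto

lemma diss_le: "finite V \<Longrightarrow> dissociation_set V E F \<Longrightarrow> card F \<le> dissociation_number V E"
  unfolding dissociation_number_def by (rule Max_ge) (auto intro: finite_imageI diss_fin)

lemma diss_max: "finite V \<Longrightarrow> \<exists>F. dissociation_set V E F \<and> card F = dissociation_number V E"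
proof -
  assume fin: "finite V"
  have "dissociation_set V E {}" unfolding dissociation_set_def by simp
  then have "dissociation_number V E \<in> card ` {F. dissociation_set V E F}"
    unfolding dissociation_number_def using fin
    by (intro Max_in) (auto intro: finite_imageI diss_fin)
  then show ?thesis by auto
qed

lemma psi_bound:
  assumes sg: "simple_graph V E" and conn: "connected_graph V E" and ne: "V \<noteq> {}"
    and dg: "\<forall>v\<in>V. degree V E v \<le> 3"
  shows "5 * dissociation_number V E \<le> 4 * card V + 2"
proof -
  have fin: "finite V" using sg simple_graph_def by blast
  obtain F where F: "dissociation_set V E F" "card F = dissociation_number V E"
    using diss_max[OF fin] by blast
  have FV: "F \<subseteq> V" using F(1) unfolding dissociation_set_def by simp
  have cV: "card V = card F + card (V - F)"
    using fin FV by (metis card_Diff_subset finite_subset le_add_diff_inverse card_mono)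
  have "2 * card V \<le> card F + 6 * card (V - F) + 2" by (rule bound_core(1)[OF sg conn ne dg F(1)])
  then show ?thesis using cV F(2) by linarith
qed

lemma card_eq_le1: "card {u. u = b \<and> P u} \<le> Suc 0"
  by (rule order_trans[OF card_mono[of "{b}"]]) auto

lemma P5_lower:
  "(V, E) \<in> P5_trees \<Longrightarrow> finite V \<and> (\<forall>e\<in>E. e \<subseteq> V) \<and> 4 * card V + 2 \<le> 5 * dissociation_number V E"
proof (induction rule: P5_trees.induct)
  case (K2 a b)
  have d: "dissociation_set {a, b} {{a, b}} {a, b}"
    unfolding dissociation_set_def adj_def using K2 by (auto simp: doubleton_eq_iff card_eq_le1)
  have "card {a, b} \<le> dissociation_number {a, b} {{a, b}}" by (rule diss_le[OF _ d]) simp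
  then show ?case using K2 by simp
next
  case (attach V E u x y z j k)
  have fin: "finite V" and EV: "\<forall>e\<in>E. e \<subseteq> V" using attach.IH by auto
  obtain F where F: "dissociation_set V E F" "card F = dissociation_number V E"
    using diss_max[OF fin] by blast
  have FV: "F \<subseteq> V" using F(1) unfolding dissociation_set_def by simp
  define V' where "V' = V \<union> {x, y, z, j, k}"
  define E' where "E' = E \<union> {{u, z}, {z, y}, {z, j}, {y, x}, {j, k}}"
  define F' where "F' = F \<union> {x, y, j, k}"
  have nv: "x \<notin> V" "y \<notin> V" "z \<notin> V" "j \<notin> V" "k \<notin> V" using attach by auto
  have ds: "x \<noteq> y" "x \<noteq> z" "x \<noteq> j" "x \<noteq> k" "y \<noteq> z" "y \<noteq> j" "y \<noteq> k" "z \<noteq> j" "z \<noteq> k" "j \<noteq> k"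
    using attach(3) by auto
  have adjE: "w \<in> V \<and> v \<in> V" if "adj E w v" for w v using that EV unfolding adj_def by auto
  have sF: "{w\<in>F'. adj E' w v} \<subseteq> {w\<in>F. adj E w v}" if "v \<in> F" for v
  proof
    fix w assume w: "w \<in> {w\<in>F'. adj E' w v}"
    have vV: "v \<in> V" using that FV by auto
    show "w \<in> {w\<in>F. adj E w v}"
      using w vV nv ds adjE unfolding F'_def E'_def adj_def
      by (auto simp: doubleton_eq_iff dest: subsetD[OF FV])
  qed
  have sx: "{w\<in>F'. adj E' w x} \<subseteq> {y}"
    using nv ds adjE attach(2) FV unfolding F'_def E'_def adj_def by (auto simp: doubleton_eq_iff)
  have sy: "{w\<in>F'. adj E' w y} \<subseteq> {x}"
    using nv ds adjE attach(2) FV unfolding F'_def E'_def adj_def by (auto simp: doubleton_eq_iff)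
  have sj: "{w\<in>F'. adj E' w j} \<subseteq> {k}"
    using nv ds adjE attach(2) FV unfolding F'_def E'_def adj_def by (auto simp: doubleton_eq_iff)
  have sk: "{w\<in>F'. adj E' w k} \<subseteq> {j}"
    using nv ds adjE attach(2) FV unfolding F'_def E'_def adj_def by (auto simp: doubleton_eq_iff)
  have finF: "finite F" using fin FV by (rule finite_subset[rotated])
  have d': "dissociation_set V' E' F'"
    unfolding dissociation_set_def
  proof
    show "F' \<subseteq> V'" using FV unfolding F'_def V'_def by auto
    show "\<forall>v\<in>F'. card {u \<in> F'. adj E' u v} \<le> 1"
    proof
      fix v assume "v \<in> F'"
      then consider "v \<in> F" | "v = x" | "v = y" | "v = j" | "v = k" unfolding F'_def by auto
      then show "card {u \<in> F'. adj E' u v} \<le> 1"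
      proof cases
        case 1
        have "card {u \<in> F'. adj E' u v} \<le> card {w\<in>F. adj E w v}"
          using sF[OF 1] finF by (intro card_mono) auto
        then show ?thesis using F(1) 1 unfolding dissociation_set_def by fastforce
      qed (use sx sy sj sk in \<open>auto dest: card_mono[rotated]\<close>)
    qed
  qed
  have finV': "finite V'" using fin unfolding V'_def by simp
  have "card F' \<le> dissociation_number V' E'" by (rule diss_le[OF finV' d'])
  moreover have "card F' = card F + 4" unfolding F'_def using finF nv ds FV
    by (subst card_Un_disjoint) auto
  moreover have "card V' = card V + 5" unfolding V'_def using fin nv ds
    by (subst card_Un_disjoint) auto
  moreover have "4 * card V + 2 \<le> 5 * card F" using attach.IH F(2) by simp
  moreover have "\<forall>e\<in>E'. e \<subseteq> V'" using EV attach(2) unfolding E'_def V'_def by auto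
  ultimately show ?case using finV' unfolding V'_def E'_def by simp
qed

lemma walk_avoid:
  assumes cross: "\<And>a b. adj E a b \<Longrightarrow> a \<in> P \<Longrightarrow> b \<notin> P \<Longrightarrow> a = z \<and> b = u"
    and E'_def: "E' = {e\<in>E. e \<subseteq> V - P}"
  shows "walk E p \<Longrightarrow> p \<noteq> [] \<Longrightarrow> set p \<subseteq> V \<Longrightarrow> last p \<notin> P \<Longrightarrow>
    \<exists>q. q \<noteq> [] \<and> walk E' q \<and> hd q = (if hd p \<in> P then u else hd p) \<and> last q = last p \<and> set q \<subseteq> V - P"
proof (induction p)
  case Nil
  then show ?case by simp
next
  case (Cons v p)
  show ?case
  proof (cases "p = []")
    case True
    have "v \<notin> P" "v \<in> V" using Cons.prems True by auto
    then show ?thesis using True by (intro exI[of _ "[v]"]) simp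
  next
    case False
    have wp: "walk E p" and avw: "adj E v (hd p)" using Cons.prems(1) False by (simp_all add: walk_Cons)
    have sp: "set p \<subseteq> V" "last p \<notin> P" using Cons.prems(3,4) False by auto
    obtain q where q: "q \<noteq> []" "walk E' q" "hd q = (if hd p \<in> P then u else hd p)" "last q = last p" "set q \<subseteq> V - P"
      using Cons.IH[OF wp False sp] by blast
    have vV: "v \<in> V" and wV: "hd p \<in> V" using Cons.prems(3) False by auto
    have lst: "last (v # p) = last p" using False by simp
    consider "v \<in> P" "hd p \<in> P" | "v \<in> P" "hd p \<notin> P" | "v \<notin> P" "hd p \<in> P" | "v \<notin> P" "hd p \<notin> P" by blast
    then show ?thesis
    proof cases
      case 1 then show ?thesis using q lst by (intro exI[of _ q]) auto
    next
      case 2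
      then have "hd p = u" using cross[OF avw] by blast
      then show ?thesis using q lst 2 by (intro exI[of _ q]) auto
    next
      case 3
      have "adj E (hd p) v" using avw adj_sym by metis
      then have "v = u" using cross 3 by blast
      then show ?thesis using q lst 3 by (intro exI[of _ q]) auto
    next
      case 4
      have "adj E' v (hd q)" using avw 4 q(3) vV wV unfolding E'_def adj_def by auto
      then have "walk E' (v # q)" using q(2) by (simp add: walk_Cons)
      then show ?thesis using q lst 4 vV by (intro exI[of _ "v # q"]) auto
    qed
  qed
qed

lemma reduce:
  assumes st: "subcubic_tree V E"
    and PV: "{x,y,z,j,k} \<subseteq> V" and dst: "distinct [x,y,z,j,k]" and uV: "u \<in> V" and uP: "u \<notin> {x,y,z,j,k}"
    and nx: "\<forall>w\<in>V. adj E w x \<longleftrightarrow> w = y"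
    and ny: "\<forall>w\<in>V. adj E w y \<longleftrightarrow> w = x \<or> w = z"
    and nk: "\<forall>w\<in>V. adj E w k \<longleftrightarrow> w = j"
    and nj: "\<forall>w\<in>V. adj E w j \<longleftrightarrow> w = k \<or> w = z"
    and nz: "\<forall>w\<in>V. adj E w z \<longleftrightarrow> w = y \<or> w = j \<or> w = u"
  defines "P \<equiv> {x,y,z,j,k}"
  defines "V' \<equiv> V - P"
  defines "E' \<equiv> {e\<in>E. e \<subseteq> V'}"
  shows "subcubic_tree V' E'" and "V = V' \<union> {x,y,z,j,k}"
    and "E = E' \<union> {{u,z},{z,y},{z,j},{y,x},{j,k}}" and "card V' + 5 = card V" and "u \<in> V'"
proof -
  have sg: "simple_graph V E" and conn: "connected_graph V E" and nc: "\<not> has_cycle V E"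
    and dg: "\<forall>v\<in>V. degree V E v \<le> 3"
    using st unfolding subcubic_tree_def tree_def by auto
  have fin: "finite V" using sg unfolding simple_graph_def by simp
  have cross: "a = z \<and> b = u" if ab: "adj E a b" and aP: "a \<in> P" and bP: "b \<notin> P" for a b
  proof -
    have bV: "b \<in> V" using adj_V[OF sg ab] by simp
    have ba: "adj E b a" using ab adj_sym by metis
    from aP have "a = x \<or> a = y \<or> a = z \<or> a = j \<or> a = k" unfolding P_def by simp
    then show ?thesis
    proof (elim disjE)
      assume "a = x" then show ?thesis using nx bV ba bP unfolding P_def by auto
    next
      assume "a = y" then show ?thesis using ny bV ba bP unfolding P_def by auto
    next
      assume "a = z" then show ?thesis using nz bV ba bP unfolding P_def by auto
    next
      assume "a = j" then show ?thesis using nj bV ba bP unfolding P_def by auto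
    next
      assume "a = k" then show ?thesis using nk bV ba bP unfolding P_def by auto
    qed
  qed
  have key: "{a,b} \<in> {{u,z},{z,y},{z,j},{y,x},{j,k}}" if ab: "adj E a b" and aP: "a \<in> P" for a b
  proof -
    have bV: "b \<in> V" using adj_V[OF sg ab] by simp
    have ba: "adj E b a" using ab adj_sym by metis
    from aP have "a = x \<or> a = y \<or> a = z \<or> a = j \<or> a = k" unfolding P_def by simp
    then show ?thesis
    proof (elim disjE)
      assume "a = x" then show ?thesis using nx bV ba by (auto simp: insert_commute)
    next
      assume "a = y" then show ?thesis using ny bV ba by (auto simp: insert_commute)
    next
      assume "a = z" then show ?thesis using nz bV ba by (auto simp: insert_commute)
    next
      assume "a = j" then show ?thesis using nj bV ba by (auto simp: insert_commute)
    next
      assume "a = k" then show ?thesis using nk bV ba by (auto simp: insert_commute)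
    qed
  qed
  show uV': "u \<in> V'" using uV uP unfolding V'_def P_def by simp
  show "V = V' \<union> {x,y,z,j,k}" using PV unfolding V'_def P_def by auto
  have cP: "card P = 5" using dst unfolding P_def by simp
  show "card V' + 5 = card V" unfolding V'_def
    using PV fin cP card_Diff_subset[of P V] card_mono[OF fin, of P] unfolding P_def
    by (simp add: finite_subset)
  have e5: "{{u,z},{z,y},{z,j},{y,x},{j,k}} \<subseteq> E"
  proof -
    have "adj E u z" "adj E z y" "adj E z j" "adj E y x" "adj E j k"
      using nz nx nk ny nj uV PV by auto
    then show ?thesis unfolding adj_def by auto
  qed
  show "E = E' \<union> {{u,z},{z,y},{z,j},{y,x},{j,k}}"
  proof
    show "E' \<union> {{u,z},{z,y},{z,j},{y,x},{j,k}} \<subseteq> E" using e5 unfolding E'_def by auto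
    show "E \<subseteq> E' \<union> {{u,z},{z,y},{z,j},{y,x},{j,k}}"
    proof
      fix e assume eE: "e \<in> E"
      then obtain a b where e: "e = {a,b}" "a \<in> V" "b \<in> V"
        using sg unfolding simple_graph_def by blast
      have ab: "adj E a b" and ba: "adj E b a" using eE e unfolding adj_def by (auto simp: insert_commute)
      consider "a \<notin> P" "b \<notin> P" | "a \<in> P" | "b \<in> P" by blast
      then show "e \<in> E' \<union> {{u,z},{z,y},{z,j},{y,x},{j,k}}"
      proof cases
        case 1 then show ?thesis using eE e unfolding E'_def V'_def by auto
      next
        case 2 then show ?thesis using key[OF ab] unfolding e(1) by blast
      next
        case 3
        have "{b,a} = {a,b}" by (rule insert_commute)
        then show ?thesis using key[OF ba 3] unfolding e(1) by (metis UnI2)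
      qed
    qed
  qed
  have adjE': "adj E' a b \<longleftrightarrow> adj E a b \<and> a \<in> V' \<and> b \<in> V'" for a b
    unfolding E'_def adj_def by auto
  have sg': "simple_graph V' E'"
    unfolding simple_graph_def
  proof (intro conjI ballI)
    show "finite V'" using fin unfolding V'_def by simp
    fix e assume "e \<in> E'"
    then have eE: "e \<in> E" and eV: "e \<subseteq> V'" unfolding E'_def by auto
    then obtain a b where "e = {a,b}" "a \<noteq> b" using sg unfolding simple_graph_def by blast
    then show "\<exists>u v. e = {u, v} \<and> u \<noteq> v \<and> u \<in> V' \<and> v \<in> V'" using eV by auto
  qed
  have conn': "connected_graph V' E'"
    unfolding connected_graph_def
  proof (intro ballI)
    fix a b assume a: "a \<in> V'" and b: "b \<in> V'"
    obtain p where p: "p \<noteq> []" "hd p = a" "last p = b" "set p \<subseteq> V" "walk E p"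
      using conn[unfolded connected_graph_def, rule_format, of a b] a b unfolding V'_def by auto
    have "\<exists>q. q \<noteq> [] \<and> walk E' q \<and> hd q = (if hd p \<in> P then u else hd p) \<and> last q = last p \<and> set q \<subseteq> V - P"
      by (rule walk_avoid[OF cross, where E'="E'" and V=V]) (use p b in \<open>auto simp: E'_def V'_def\<close>)
    then show "\<exists>p. p \<noteq> [] \<and> hd p = a \<and> last p = b \<and> set p \<subseteq> V' \<and> walk E' p"
      using p a unfolding V'_def by auto
  qed
  have nc': "\<not> has_cycle V' E'"
  proof
    assume "has_cycle V' E'"
    then obtain p where p: "length p \<ge> 3" "distinct p" "set p \<subseteq> V'" "walk E' p" "adj E' (last p) (hd p)"
      unfolding has_cycle_def by blast
    have "walk E p" using p(4) by (rule walk_mono) (simp add: adjE')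
    moreover have "adj E (last p) (hd p)" using p(5) adjE' by simp
    moreover have "set p \<subseteq> V" using p(3) unfolding V'_def by auto
    ultimately have "has_cycle V E" using p(1,2) unfolding has_cycle_def by blast
    then show False using nc by simp
  qed
  have dg': "\<forall>v\<in>V'. degree V' E' v \<le> 3"
  proof
    fix v assume v: "v \<in> V'"
    have "degree V' E' v \<le> degree V E v" unfolding degree_def
      using fin adjE' unfolding V'_def by (intro card_mono) auto
    then show "degree V' E' v \<le> 3" using dg v unfolding V'_def by force
  qed
  show "subcubic_tree V' E'" unfolding subcubic_tree_def tree_def
    using sg' conn' nc' dg' uV' by auto
qed

lemma find_P5:
  assumes st: "subcubic_tree V E" and Fd: "dissociation_set V E F"
    and eq: "2 * card V = card F + 6 * card (V - F) + 2" and Sne: "V - F \<noteq> {}"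
  shows "\<exists>x y z j k u. {x,y,z,j,k} \<subseteq> V \<and> distinct [x,y,z,j,k] \<and> u \<in> V \<and> u \<notin> {x,y,z,j,k} \<and>
    (\<forall>w\<in>V. adj E w x \<longleftrightarrow> w = y) \<and> (\<forall>w\<in>V. adj E w y \<longleftrightarrow> w = x \<or> w = z) \<and>
    (\<forall>w\<in>V. adj E w k \<longleftrightarrow> w = j) \<and> (\<forall>w\<in>V. adj E w j \<longleftrightarrow> w = k \<or> w = z) \<and>
    (\<forall>w\<in>V. adj E w z \<longleftrightarrow> w = y \<or> w = j \<or> w = u) \<and> z \<notin> F"
proof -
  have sg: "simple_graph V E" and conn: "connected_graph V E" and ne: "V \<noteq> {}"
    and dg: "\<forall>v\<in>V. degree V E v \<le> 3"
    using st unfolding subcubic_tree_def tree_def by auto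
  have fin: "finite V" using sg unfolding simple_graph_def by simp
  have FV: "F \<subseteq> V" using Fd unfolding dissociation_set_def by simp
  have finF: "finite F" using fin FV by (rule finite_subset[rotated])
  define S where "S = V - F"
  have finS: "finite S" using fin S_def by simp
  have cV: "card V = card F + card S" unfolding S_def
    using fin FV by (metis card_Diff_subset finF le_add_diff_inverse card_mono)
  have core: "(\<forall>v\<in>F. card {w\<in>F. adj E w v} = 1) \<and> (\<forall>v\<in>V-F. card {w\<in>F. adj E w v} = 3) \<and>
         (\<Sum>v\<in>F. card {w\<in>V-F. adj E w v}) = 3 * card (V - F)"
    by (rule bound_core(2)[OF sg conn ne dg Fd eq])
  define b where "b v = card {w\<in>S. adj E w v}" for v
  have A1: "\<forall>v\<in>F. card {w\<in>F. adj E w v} = 1" using core by simp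
  have A3: "\<forall>v\<in>S. card {w\<in>F. adj E w v} = 3" using core unfolding S_def by simp
  have sumb: "(\<Sum>v\<in>F. b v) = 3 * card S" using core unfolding S_def b_def by simp
  have cF: "card F = 4 * card S + 2" using eq cV unfolding S_def[symmetric] by linarith
  have NS: "{w\<in>V. adj E w v} = {w\<in>F. adj E w v}" if vS: "v \<in> S" for v
  proof -
    have sub: "{w\<in>F. adj E w v} \<subseteq> {w\<in>V. adj E w v}" using FV by auto
    have "card {w\<in>V. adj E w v} \<le> card {w\<in>F. adj E w v}"
      using dg A3 vS unfolding S_def degree_def by auto
    moreover have "card {w\<in>F. adj E w v} \<le> card {w\<in>V. adj E w v}"
      using fin sub by (intro card_mono) auto
    ultimately have "card {w\<in>F. adj E w v} = card {w\<in>V. adj E w v}" by simp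
    then show ?thesis using card_subset_eq[OF _ sub] fin by simp
  qed
  define m where "m v = (SOME w. {w'\<in>F. adj E w' v} = {w})" for v
  have mprop: "{w\<in>F. adj E w v} = {m v}" if vF: "v \<in> F" for v
  proof -
    have "\<exists>w. {w'\<in>F. adj E w' v} = {w}" using A1 vF by (simp add: card_1_singleton_iff)
    then show ?thesis unfolding m_def by (rule someI_ex)
  qed
  have mF: "m v \<in> F" and madj: "adj E (m v) v" if "v \<in> F" for v
    using mprop[OF that] by blast+
  have muniq: "w = m v" if "v \<in> F" "w \<in> F" "adj E w v" for v w
    using mprop[OF that(1)] that by blast
  have mm: "m (m v) = v" if vF: "v \<in> F" for v
  proof -
    have "adj E v (m v)" using madj[OF vF] adj_sym by metis
    then show ?thesis using muniq[OF mF[OF vF] vF] by simp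
  qed
  have mne: "m v \<noteq> v" if "v \<in> F" for v using madj[OF that] adj_irrefl[OF sg] by metis
  have finSN: "finite {w\<in>S. adj E w v}" for v using finS by simp
  have b0: "\<not> adj E w v" if "b v = 0" "w \<in> S" for v w
    using that finSN[of v] unfolding b_def by auto
  obtain s0 where s0: "s0 \<in> S" using Sne unfolding S_def by blast
  have wpos: "b v + b (m v) \<ge> 1" if vF: "v \<in> F" for v
  proof (rule ccontr)
    assume "\<not> b v + b (m v) \<ge> 1"
    then have bv: "b v = 0" and bmv: "b (m v) = 0" by auto
    define C where "C = {v, m v}"
    have closed: "c \<in> C" if aC: "a \<in> C" and ac: "adj E a c" for a c
    proof -
      have ca: "adj E c a" using ac adj_sym by metis
      have cV': "c \<in> V" using adj_V[OF sg ca] by simp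
      show ?thesis
      proof (cases "c \<in> F")
        case True
        from aC have "a = v \<or> a = m v" unfolding C_def by simp
        then show ?thesis
        proof (elim disjE)
          assume "a = v" then show ?thesis using muniq[OF vF True] ca unfolding C_def by simp
        next
          assume "a = m v"
          then show ?thesis using muniq[OF mF[OF vF] True] ca mm[OF vF] unfolding C_def by simp
        qed
      next
        case False
        then have cS: "c \<in> S" using cV' unfolding S_def by simp
        from aC have "a = v \<or> a = m v" unfolding C_def by simp
        then show ?thesis
        proof (elim disjE)
          assume "a = v" then show ?thesis using b0[OF bv cS] ca by simp
        next
          assume "a = m v"
          then show ?thesis using b0[OF bmv cS] ca by simp
        qed
      qed
    qed
    obtain p where p: "p \<noteq> []" "hd p = v" "last p = s0" "set p \<subseteq> V" "walk E p"
      using conn[unfolded connected_graph_def, rule_format, of v s0] vF FV s0 unfolding S_def by auto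
    have "set p \<subseteq> C" by (rule walk_closed[OF p(5) p(1)]) (use p(2) closed in \<open>auto simp: C_def\<close>)
    then have "s0 \<in> C" using p(1,3) last_in_set by blast
    then show False using s0 vF mF[OF vF] unfolding C_def S_def by auto
  qed
  have bijm: "m ` F = F"
  proof
    show "m ` F \<subseteq> F" using mF by auto
    show "F \<subseteq> m ` F"
    proof
      fix v assume "v \<in> F" then show "v \<in> m ` F" using mm mF by (metis image_eqI)
    qed
  qed
  have injm: "inj_on m F" by (rule inj_onI) (metis mm)
  have sumbm: "(\<Sum>v\<in>F. b (m v)) = (\<Sum>v\<in>F. b v)"
    using sum.reindex[OF injm, of b] bijm by simp
  define Pd where "Pd = {v\<in>F. b v + b (m v) \<le> 1}"
  have "(\<Sum>v\<in>F. 2) \<le> (\<Sum>v\<in>F. (b v + b (m v)) + (if b v + b (m v) \<le> 1 then 1 else 0 :: nat))"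
    using wpos by (intro sum_mono) auto
  also have "\<dots> = (\<Sum>v\<in>F. b v) + (\<Sum>v\<in>F. b (m v)) + card Pd"
    unfolding Pd_def using finF by (simp add: sum.distrib card_filter_sum)
  finally have cPd: "2 * card S + 4 \<le> card Pd" using sumb sumbm cF by simp
  define Y where "Y = {v\<in>F. b v = 1 \<and> b (m v) = 0}"
  have PdY: "Pd \<subseteq> Y \<union> m ` Y"
  proof
    fix v assume "v \<in> Pd"
    then have vF: "v \<in> F" and w1: "b v + b (m v) = 1" using wpos unfolding Pd_def by force+
    show "v \<in> Y \<union> m ` Y"
    proof (cases "b v = 1")
      case True then show ?thesis using vF w1 unfolding Y_def by simp
    next
      case False
      then have "m v \<in> Y" using w1 mm[OF vF] mF[OF vF] unfolding Y_def by simp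
      then show ?thesis using mm[OF vF] by (metis UnI2 image_eqI)
    qed
  qed
  have finY: "finite Y" unfolding Y_def using finF by simp
  have "card Pd \<le> card (Y \<union> m ` Y)" using PdY finY by (intro card_mono) auto
  also have "\<dots> \<le> card Y + card (m ` Y)" by (rule card_Un_le)
  also have "\<dots> \<le> 2 * card Y" using card_image_le[OF finY, of m] by simp
  finally have cY: "card S + 2 \<le> card Y" using cPd by simp
  define g where "g y = (SOME z. {w\<in>S. adj E w y} = {z})" for y
  have gprop: "{w\<in>S. adj E w y} = {g y}" if "y \<in> Y" for y
  proof -
    have "card {w\<in>S. adj E w y} = 1" using that unfolding Y_def b_def by simp
    then have "\<exists>z. {w\<in>S. adj E w y} = {z}" by (simp add: card_1_singleton_iff)
    then show ?thesis unfolding g_def by (rule someI_ex)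
  qed
  have "\<not> inj_on g Y"
  proof
    assume "inj_on g Y"
    moreover have "g ` Y \<subseteq> S" using gprop by blast
    ultimately have "card Y \<le> card S" using card_inj_on_le finS by blast
    then show False using cY by simp
  qed
  then obtain y j where yY: "y \<in> Y" and jY: "j \<in> Y" and yj: "y \<noteq> j" and gyj: "g y = g j"
    unfolding inj_on_def by blast
  define z where "z = g y"
  define x where "x = m y"
  define k where "k = m j"
  have yF: "y \<in> F" and jF: "j \<in> F" using yY jY unfolding Y_def by auto
  have xF: "x \<in> F" and kF: "k \<in> F" using mF yF jF unfolding x_def k_def by auto
  have zS: "z \<in> S" and zy: "adj E z y" using gprop[OF yY] unfolding z_def by blast+
  have zj: "adj E z j" using gprop[OF jY] gyj unfolding z_def by blast
  have bx: "b x = 0" using yY unfolding Y_def x_def by simp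
  have bk: "b k = 0" using jY unfolding Y_def k_def by simp
  have zV: "z \<in> V" using zS unfolding S_def by simp
  have vFS: "w \<in> F \<or> w \<in> S" if "w \<in> V" for w using that unfolding S_def by auto
  have nx: "\<forall>w\<in>V. adj E w x \<longleftrightarrow> w = y"
  proof
    fix w assume wV: "w \<in> V"
    have "adj E y x" using madj[OF xF] mm[OF yF] unfolding x_def by simp
    then show "adj E w x \<longleftrightarrow> w = y"
      using vFS[OF wV] muniq[OF xF] mm[OF yF] b0[OF bx] unfolding x_def by auto
  qed
  have nk: "\<forall>w\<in>V. adj E w k \<longleftrightarrow> w = j"
  proof
    fix w assume wV: "w \<in> V"
    have "adj E j k" using madj[OF kF] mm[OF jF] unfolding k_def by simp
    then show "adj E w k \<longleftrightarrow> w = j"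
      using vFS[OF wV] muniq[OF kF] mm[OF jF] b0[OF bk] unfolding k_def by auto
  qed
  have ny: "\<forall>w\<in>V. adj E w y \<longleftrightarrow> w = x \<or> w = z"
  proof
    fix w assume wV: "w \<in> V"
    have "adj E x y" using madj[OF yF] unfolding x_def by simp
    moreover have "adj E z y" by (rule zy)
    moreover have "w \<in> S \<Longrightarrow> adj E w y \<Longrightarrow> w = z" using gprop[OF yY] unfolding z_def by blast
    ultimately show "adj E w y \<longleftrightarrow> w = x \<or> w = z"
      using vFS[OF wV] muniq[OF yF] unfolding x_def by auto
  qed
  have nj: "\<forall>w\<in>V. adj E w j \<longleftrightarrow> w = k \<or> w = z"
  proof
    fix w assume wV: "w \<in> V"
    have "adj E k j" using madj[OF jF] unfolding k_def by simp
    moreover have "adj E z j" by (rule zj)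
    moreover have "w \<in> S \<Longrightarrow> adj E w j \<Longrightarrow> w = z" using gprop[OF jY] unfolding z_def gyj by blast
    ultimately show "adj E w j \<longleftrightarrow> w = k \<or> w = z"
      using vFS[OF wV] muniq[OF jF] unfolding k_def by auto
  qed
  define NZ where "NZ = {w\<in>F. adj E w z}"
  have cNZ: "card NZ = 3" using A3 zS unfolding NZ_def by simp
  have yNZ: "y \<in> NZ" and jNZ: "j \<in> NZ" using zy zj yF jF adj_sym unfolding NZ_def by (metis mem_Collect_eq)+
  have finNZ: "finite NZ" unfolding NZ_def using finF by simp
  have "card (NZ - {y, j}) = 1" using cNZ yNZ jNZ yj finNZ by (simp add: card_Diff_subset)
  then obtain u where u: "NZ - {y, j} = {u}" by (auto simp: card_1_singleton_iff)
  have uNZ: "u \<in> NZ" and uy: "u \<noteq> y" and uj: "u \<noteq> j" using u by auto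
  have NZeq: "NZ = {y, j, u}" using u yNZ jNZ by auto
  have nz: "\<forall>w\<in>V. adj E w z \<longleftrightarrow> w = y \<or> w = j \<or> w = u"
  proof
    fix w assume wV: "w \<in> V"
    have "{w\<in>V. adj E w z} = NZ" using NS[OF zS] unfolding NZ_def by simp
    then show "adj E w z \<longleftrightarrow> w = y \<or> w = j \<or> w = u" using wV NZeq by blast
  qed
  have uF: "u \<in> F" and uz: "adj E u z" using uNZ unfolding NZ_def by auto
  have uV: "u \<in> V" using uF FV by auto
  have yV: "y \<in> V" and jV: "j \<in> V" and xV: "x \<in> V" and kV: "k \<in> V" using yF jF xF kF FV by auto
  have zF: "z \<notin> F" using zS unfolding S_def by simp
  have xy: "x \<noteq> y" using mne[OF yF] unfolding x_def by simp
  have jk: "j \<noteq> k" using mne[OF jF] unfolding k_def by simp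
  have xk: "x \<noteq> k" using mm[OF yF] mm[OF jF] yj unfolding x_def k_def by metis
  have zx: "adj E z x \<Longrightarrow> False" using nx zV zF yF by auto
  have zk: "adj E z k \<Longrightarrow> False" using nk zV zF jF by auto
  have xj: "x \<noteq> j" using zx zj by blast
  have yk: "y \<noteq> k" using zk zy by blast
  have ux: "u \<noteq> x" using zx uz adj_sym by metis
  have uk: "u \<noteq> k" using zk uz adj_sym by metis
  have uzn: "u \<noteq> z" using uz adj_irrefl[OF sg] by metis
  show ?thesis
    apply (rule exI[of _ x], rule exI[of _ y], rule exI[of _ z], rule exI[of _ j], rule exI[of _ k], rule exI[of _ u])
    using xV yV zV jV kV uV xy jk xk xj yk ux uk uzn uy uj yj zF xF yF jF kF nx ny nk nj nz
    by auto
qed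

lemma base_case:
  assumes st: "subcubic_tree V E" and Fd: "dissociation_set V E F"
    and eq: "2 * card V = card F + 6 * card (V - F) + 2" and Se: "V - F = {}"
  shows "(V, E) \<in> P5_trees"
proof -
  have sg: "simple_graph V E" and conn: "connected_graph V E" and ne: "V \<noteq> {}"
    and dg: "\<forall>v\<in>V. degree V E v \<le> 3"
    using st unfolding subcubic_tree_def tree_def by auto
  have FV: "F \<subseteq> V" using Fd unfolding dissociation_set_def by simp
  have FeV: "F = V" using FV Se by blast
  have A1: "\<forall>v\<in>F. card {w\<in>F. adj E w v} = 1"
    using bound_core(2)[OF sg conn ne dg Fd eq] by simp
  have "card V = 2" using eq Se FeV by simp
  then obtain a b where ab: "V = {a, b}" "a \<noteq> b" by (auto simp: card_2_iff)
  have "card {w\<in>V. adj E w a} = 1" using A1 FeV ab by simp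
  then obtain c where c: "{w\<in>V. adj E w a} = {c}" by (auto simp: card_1_singleton_iff)
  have "adj E c a" "c \<in> V" using c by auto
  then have "c = b" using adj_irrefl[OF sg] ab by auto
  then have abE: "{a, b} \<in> E" using \<open>adj E c a\<close> unfolding adj_def by (simp add: insert_commute)
  have "E = {{a, b}}"
  proof
    show "{{a, b}} \<subseteq> E" using abE by simp
    show "E \<subseteq> {{a, b}}"
    proof
      fix e assume "e \<in> E"
      then obtain p q where "e = {p, q}" "p \<noteq> q" "p \<in> V" "q \<in> V" using sg unfolding simple_graph_def by blast
      then show "e \<in> {{a, b}}" using ab by (auto simp: insert_commute)
    qed
  qed
  then show ?thesis using ab P5_trees.K2 by simp
qed

lemma eq_P5:
  "subcubic_tree V E \<Longrightarrow> 5 * dissociation_number V E = 4 * card V + 2 \<Longrightarrow> (V, E) \<in> P5_trees"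
proof (induction "card V" arbitrary: V E rule: less_induct)
  case less
  have st: "subcubic_tree V E" by (rule less.prems(1))
  have sg: "simple_graph V E" using st unfolding subcubic_tree_def tree_def by auto
  have fin: "finite V" using sg unfolding simple_graph_def by simp
  obtain F where F: "dissociation_set V E F" "card F = dissociation_number V E"
    using diss_max[OF fin] by blast
  have FV: "F \<subseteq> V" using F(1) unfolding dissociation_set_def by simp
  have finF: "finite F" using fin FV by (rule finite_subset[rotated])
  have cV: "card V = card F + card (V - F)"
    using fin FV by (metis card_Diff_subset finF le_add_diff_inverse card_mono)
  have eq: "2 * card V = card F + 6 * card (V - F) + 2" using cV F(2) less.prems(2) by linarith
  show ?case
  proof (cases "V - F = {}")
    case True
    then show ?thesis using base_case[OF st F(1) eq] by simp
  next
    case False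
    obtain x y z j k u where P:
      "{x,y,z,j,k} \<subseteq> V" "distinct [x,y,z,j,k]" "u \<in> V" "u \<notin> {x,y,z,j,k}"
      "\<forall>w\<in>V. adj E w x \<longleftrightarrow> w = y" "\<forall>w\<in>V. adj E w y \<longleftrightarrow> w = x \<or> w = z"
      "\<forall>w\<in>V. adj E w k \<longleftrightarrow> w = j" "\<forall>w\<in>V. adj E w j \<longleftrightarrow> w = k \<or> w = z"
      "\<forall>w\<in>V. adj E w z \<longleftrightarrow> w = y \<or> w = j \<or> w = u" "z \<notin> F"
      using find_P5[OF st F(1) eq False] by (elim exE conjE) (rule that, assumption+)
    define V' where "V' = V - {x,y,z,j,k}"
    define E' where "E' = {e\<in>E. e \<subseteq> V'}"
    note R = reduce[OF st P(1-9), folded V'_def, folded E'_def]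
    have st': "subcubic_tree V' E'" and VV: "V = V' \<union> {x,y,z,j,k}"
      and EE: "E = E' \<union> {{u,z},{z,y},{z,j},{y,x},{j,k}}" and cV': "card V' + 5 = card V"
      and uV': "u \<in> V'" using R by auto
    have sg': "simple_graph V' E'" and conn': "connected_graph V' E'" and ne': "V' \<noteq> {}"
      and dg': "\<forall>v\<in>V'. degree V' E' v \<le> 3"
      using st' unfolding subcubic_tree_def tree_def by auto
    have fin': "finite V'" using sg' unfolding simple_graph_def by simp
    have up: "5 * dissociation_number V' E' \<le> 4 * card V' + 2" by (rule psi_bound[OF sg' conn' ne' dg'])
    define F' where "F' = F - {x,y,z,j,k}"
    have E'E: "adj E' a b \<Longrightarrow> adj E a b" for a b unfolding E'_def adj_def by simp
    have d': "dissociation_set V' E' F'"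
      unfolding dissociation_set_def
    proof
      show "F' \<subseteq> V'" using FV unfolding F'_def V'_def by auto
      show "\<forall>v\<in>F'. card {w \<in> F'. adj E' w v} \<le> 1"
      proof
        fix v assume vF': "v \<in> F'"
        have "card {w \<in> F'. adj E' w v} \<le> card {w\<in>F. adj E w v}"
          using finF E'E unfolding F'_def by (intro card_mono) auto
        also have "\<dots> \<le> 1" using F(1) vF' unfolding dissociation_set_def F'_def by auto
        finally show "card {w \<in> F'. adj E' w v} \<le> 1" .
      qed
    qed
    have "card (F \<inter> {x,y,z,j,k}) \<le> card {x,y,j,k}"
      using P(10) by (intro card_mono) auto
    also have "\<dots> = 4" using P(2) by simp
    finally have c4: "card (F \<inter> {x,y,z,j,k}) \<le> 4" .
    have "card F' = card F - card (F \<inter> {x,y,z,j,k})" unfolding F'_def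
      using finF by (simp add: card_Diff_subset_Int)
    moreover have "card (F \<inter> {x,y,z,j,k}) \<le> card F" using finF by (intro card_mono) auto
    ultimately have cF': "card F' + 4 \<ge> card F" using c4 by linarith
    have "card F' \<le> dissociation_number V' E'" by (rule diss_le[OF fin' d'])
    then have "5 * dissociation_number V' E' = 4 * card V' + 2"
      using up cF' cV' F(2) less.prems(2) by linarith
    then have "(V', E') \<in> P5_trees"
      using less.hyps[OF _ st'] cV' by simp
    moreover have "x \<notin> V'" "y \<notin> V'" "z \<notin> V'" "j \<notin> V'" "k \<notin> V'" unfolding V'_def by auto
    ultimately have "(V' \<union> {x, y, z, j, k}, E' \<union> {{u, z}, {z, y}, {z, j}, {y, x}, {j, k}}) \<in> P5_trees"
      using P5_trees.attach[OF _ uV' P(2)] by blast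
    then show ?thesis using VV EE by simp
  qed
qed

theorem theorem2p3:
  fixes V :: "'a set" and E :: "'a set set"
  assumes "subcubic_tree V E"
  shows "real (dissociation_number V E) \<le> (4 * real (card V) + 2) / 5 \<and>
         (real (dissociation_number V E) = (4 * real (card V) + 2) / 5 \<longleftrightarrow> (V, E) \<in> P5_trees)"
proof -
  have sg: "simple_graph V E" and conn: "connected_graph V E" and ne: "V \<noteq> {}"
    and dg: "\<forall>v\<in>V. degree V E v \<le> 3"
    using assms unfolding subcubic_tree_def tree_def by auto
  have up: "5 * dissociation_number V E \<le> 4 * card V + 2" by (rule psi_bound[OF sg conn ne dg])
  have iff: "real (dissociation_number V E) = (4 * real (card V) + 2) / 5 \<longleftrightarrow>
      5 * dissociation_number V E = 4 * card V + 2"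
  proof -
    have "real (dissociation_number V E) = (4 * real (card V) + 2) / 5 \<longleftrightarrow>
        real (5 * dissociation_number V E) = real (4 * card V + 2)" by auto
    also have "\<dots> \<longleftrightarrow> 5 * dissociation_number V E = 4 * card V + 2" by (rule of_nat_eq_iff)
    finally show ?thesis .
  qed
  have "real (5 * dissociation_number V E) \<le> real (4 * card V + 2)" using up by (rule of_nat_mono)
  then have p1: "real (dissociation_number V E) \<le> (4 * real (card V) + 2) / 5" by simp
  have p2: "5 * dissociation_number V E = 4 * card V + 2 \<longleftrightarrow> (V, E) \<in> P5_trees"
  proof
    assume "5 * dissociation_number V E = 4 * card V + 2"
    then show "(V, E) \<in> P5_trees" by (rule eq_P5[OF assms])
  next
    assume "(V, E) \<in> P5_trees"
    then have "4 * card V + 2 \<le> 5 * dissociation_number V E" using P5_lower by blast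
    then show "5 * dissociation_number V E = 4 * card V + 2" using up by simp
  qed
  show ?thesis using p1 p2 iff by simp
qed

end
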